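(* Let $\lambda$ be a partition, $R:=R_\lambda$, and let $\gamma$ be a gapless $R$-tuple. Then the $\lambda$-row end max tableau $M:=M_\lambda(\gamma)$ is a $\lambda$-key. Moreover, for each $h\in[r]$, setting $j:=\lambda_{q_{h+1}}$ (so that column $j+1$ has length $q_h$ and column $j$ has length $q_{h+1}$, column $0$ being the latent column when $j=0$), one has $M_{j+1}(q_h)=\gamma_{q_h}$, and if $s\ge0$ denotes the number of elements of $B(M_j)\setminus B(M_{j+1})$ that are less than $\gamma_{q_h}$, then these $s$ elements are exactly the $s$ largest elements of $[\gamma_{q_h}]\setminus B(M_{j+1})$.
   Context: Fix $n\ge1$; $[m]=\{1,\dots,m\}$. For $R\subseteq[n-1]$ with elements $q_1<\dots<q_r$, set $q_0:=0$, $q_{r+1}:=n$, $p_h:=q_h-q_{h-1}$; the $h$-th carrel is $\{q_{h-1}+1,\dots,q_h\}$. An $R$-tuple is an $n$-tuple with entries in $[n]$; it is upper if $\nu_i\ge i$ for all $i$ and $R$-increasing if strictly increasing on each carrel. A gapless $R$-tuple is an upper $R$-increasing $R$-tuple $\gamma$ such that whenever $h\in[r]$ has $\gamma_{q_h}>\gamma_{q_h+1}$, setting $s:=\gamma_{q_h}-\gamma_{q_h+1}+1$ one has $s\le p_{h+1}$ and $\gamma_{q_h+t}=\gamma_{q_h}-s+t$ for all $t\in[s]$. A partition is $\lambda=(\lambda_1\ge\cdots\ge\lambda_n\ge0)\in\mathbb{Z}^n$; its shape has boxes $(j,i)$ (column $j$, row $i$) with $1\le j\le\lambda_1$, $1\le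 i\le\zeta_j$, where $\zeta_j:=\#\{i:\lambda_i\ge j\}$ is the length of column $j$. $R_\lambda:=\{\zeta_j:j\in[\lambda_1],\zeta_j<n\}$. A tableau of shape $\lambda$ is a filling of the boxes with values in $[n]$, strictly increasing down each column and weakly increasing left to right along rows; $\mathcal{T}_\lambda$ is the set of these, partially ordered entrywise. $T_j(i)$ is the entry in column $j$, row $i$, and $B(T_j)$ is the set of entries of column $j$. By convention every tableau has a latent column $0$ with $T_0(i)=i$ for $i\in[n]$. A $\lambda$-key is $Y\in\mathcal{T}_\lambda$ with $B(Y_l)\supseteq B(Y_j)$ whenever $1\le l\le j\le\lambda_1$. The $\lambda$-row end list of $T\in\mathcal{T}_\lambda$ is the $n$-tuple $\omega$ with $\omega_i:=T_{\lambda_i}(i)$ (using the latent column if $\lambda_i=0$). For an upper $R_\lambda$-increasing $R_\lambda$-tuple $\alpha$, the set of $T\in\mathcal{T}_\lambda$ with $\lambda$-row end list $\alpha$ is nonempty and closed under entrywise maximum; its maximum element is the $\lambda$-row end max tableau $M_\lambda(\alpha)$. *)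

theory Defs
  imports Main
begin

(* Indices 1..n.  Tuples, partitions: functions nat => nat, only values on {1..n} matter. *)

definition is_partition :: "nat \<Rightarrow> (nat \<Rightarrow> nat) \<Rightarrow> bool" where
  "is_partition n lam \<longleftrightarrow> (\<forall>i. 1 \<le> i \<and> i < n \<longrightarrow> lam (i+1) \<le> lam i)"

definition zeta :: "nat \<Rightarrow> (nat \<Rightarrow> nat) \<Rightarrow> nat \<Rightarrow> nat" where
  "zeta n lam j = card {i \<in> {1..n}. j \<le> lam i}"

definition R_of :: "nat \<Rightarrow> (nat \<Rightarrow> nat) \<Rightarrow> nat set" where
  "R_of n lam = {zeta n lam j | j. j \<in> {1..lam 1} \<and> zeta n lam j < n}"

definition qq :: "nat \<Rightarrow> nat set \<Rightarrow> nat \<Rightarrow> nat" where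
  "qq n R h = (if h = 0 then 0 else if h \<le> card R then sorted_list_of_set R ! (h - 1) else n)"

definition pp :: "nat \<Rightarrow> nat set \<Rightarrow> nat \<Rightarrow> nat" where
  "pp n R h = qq n R h - qq n R (h - 1)"

definition upper_tuple :: "nat \<Rightarrow> (nat \<Rightarrow> nat) \<Rightarrow> bool" where
  "upper_tuple n nu \<longleftrightarrow> (\<forall>i \<in> {1..n}. nu i \<in> {1..n} \<and> i \<le> nu i)"

(* strictly increasing on each carrel: i, i+1 lie in the same carrel iff i \<notin> R *)
definition R_increasing :: "nat \<Rightarrow> nat set \<Rightarrow> (nat \<Rightarrow> nat) \<Rightarrow> bool" where
  "R_increasing n R nu \<longleftrightarrow> (\<forall>i. 1 \<le> i \<and> i < n \<and> i \<notin> R \<longrightarrow> nu i < nu (i+1))"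

definition gapless :: "nat \<Rightarrow> nat set \<Rightarrow> (nat \<Rightarrow> nat) \<Rightarrow> bool" where
  "gapless n R g \<longleftrightarrow> upper_tuple n g \<and> R_increasing n R g \<and>
     (\<forall>h \<in> {1..card R}. g (qq n R h) > g (qq n R h + 1) \<longrightarrow>
        (let s = g (qq n R h) - g (qq n R h + 1) + 1 in
          s \<le> pp n R (h+1) \<and>
          (\<forall>t \<in> {1..s}. g (qq n R h + t) = g (qq n R h) - s + t)))"

(* box (j,i): column j, row i *)
definition in_shape :: "nat \<Rightarrow> (nat \<Rightarrow> nat) \<Rightarrow> nat \<Rightarrow> nat \<Rightarrow> bool" where
  "in_shape n lam j i \<longleftrightarrow> 1 \<le> j \<and> j \<le> lam 1 \<and> 1 \<le> i \<and> i \<le> zeta n lam j"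

(* A tableau is T :: nat => nat => nat, T j i = entry in column j, row i.
   Canonical encoding: latent column 0 has T 0 i = i for i in [n]; all other
   positions outside the shape hold 0, so that tableaux of shape lam correspond
   bijectively to fillings of the shape. *)
definition tableau :: "nat \<Rightarrow> (nat \<Rightarrow> nat) \<Rightarrow> (nat \<Rightarrow> nat \<Rightarrow> nat) \<Rightarrow> bool" where
  "tableau n lam T \<longleftrightarrow>
     (\<forall>j i. \<not> in_shape n lam j i \<longrightarrow> T j i = (if j = 0 \<and> 1 \<le> i \<and> i \<le> n then i else 0)) \<and>
     (\<forall>j i. in_shape n lam j i \<longrightarrow> T j i \<in> {1..n}) \<and>
     (\<forall>j i. in_shape n lam j i \<and> in_shape n lam j (i+1) \<longrightarrow> T j i < T j (i+1)) \<and>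
     (\<forall>j i. in_shape n lam j i \<and> in_shape n lam (j+1) i \<longrightarrow> T j i \<le> T (j+1) i)"

definition tab_le :: "(nat \<Rightarrow> nat \<Rightarrow> nat) \<Rightarrow> (nat \<Rightarrow> nat \<Rightarrow> nat) \<Rightarrow> bool" where
  "tab_le T U \<longleftrightarrow> (\<forall>j i. T j i \<le> U j i)"

(* B(T_j): set of entries of column j (column 0 = latent column, length n) *)
definition col_set :: "nat \<Rightarrow> (nat \<Rightarrow> nat) \<Rightarrow> (nat \<Rightarrow> nat \<Rightarrow> nat) \<Rightarrow> nat \<Rightarrow> nat set" where
  "col_set n lam T j = (\<lambda>i. T j i) ` {1..zeta n lam j}"

definition is_key :: "nat \<Rightarrow> (nat \<Rightarrow> nat) \<Rightarrow> (nat \<Rightarrow> nat \<Rightarrow> nat) \<Rightarrow> bool" where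
  "is_key n lam Y \<longleftrightarrow> tableau n lam Y \<and>
     (\<forall>l j. 1 \<le> l \<and> l \<le> j \<and> j \<le> lam 1 \<longrightarrow> col_set n lam Y j \<subseteq> col_set n lam Y l)"

definition row_end_is :: "nat \<Rightarrow> (nat \<Rightarrow> nat) \<Rightarrow> (nat \<Rightarrow> nat \<Rightarrow> nat) \<Rightarrow> (nat \<Rightarrow> nat) \<Rightarrow> bool" where
  "row_end_is n lam T alpha \<longleftrightarrow> (\<forall>i \<in> {1..n}. T (lam i) i = alpha i)"

definition row_end_max :: "nat \<Rightarrow> (nat \<Rightarrow> nat) \<Rightarrow> (nat \<Rightarrow> nat) \<Rightarrow> (nat \<Rightarrow> nat \<Rightarrow> nat)" where
  "row_end_max n lam alpha = (THE M. tableau n lam M \<and> row_end_is n lam M alpha \<and>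
     (\<forall>T. tableau n lam T \<and> row_end_is n lam T alpha \<longrightarrow> tab_le T M))"

end

theory Submission
  imports Defs
begin


lemma part_mono:
  assumes "is_partition n lam" "1 \<le> i" "i \<le> i'" "i' \<le> n"
  shows "lam i' \<le> lam i"
  using assms(3,4)
proof (induction i' rule: dec_induct)
  case base then show ?case by simp
next
  case (step k)
  have "lam (k+1) \<le> lam k" using assms(1,2) step by (simp add: is_partition_def)
  then show ?case using step by simp
qed

lemma zeta_seg:
  assumes "is_partition n lam"
  shows "{i \<in> {1..n}. j \<le> lam i} = {1..zeta n lam j}"
proof -
  let ?S = "{i \<in> {1..n}. j \<le> lam i}"
  obtain m where m: "?S = {1..m}"
  proof (cases "?S = {}")
    case True then show ?thesis using that[of 0] by simp
  next
    case False
    have fin: "finite ?S" by simp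
    let ?m = "Max ?S"
    have mS: "?m \<in> ?S" using Max_in[OF fin False] .
    have "?S = {1..?m}"
    proof
      show "?S \<subseteq> {1..?m}" using Max_ge[OF fin] by auto
      show "{1..?m} \<subseteq> ?S"
      proof
        fix i assume "i \<in> {1..?m}"
        then show "i \<in> ?S" using mS part_mono[OF assms, of i ?m] by auto
      qed
    qed
    then show ?thesis using that by blast
  qed
  then show ?thesis by (simp add: zeta_def)
qed

lemma zeta_iff:
  assumes "is_partition n lam" "1 \<le> i" "i \<le> n"
  shows "i \<le> zeta n lam j \<longleftrightarrow> j \<le> lam i"
  using zeta_seg[OF assms(1), of j] assms(2,3) by (auto simp: set_eq_iff)

lemma zeta_le: "zeta n lam j \<le> n"
  unfolding zeta_def by (rule order.trans[OF card_mono[of "{1..n}"]]) auto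

lemma zeta0: "zeta n lam 0 = n"
proof -
  have "{i \<in> {1..n}. 0 \<le> lam i} = {1..n}" by auto
  then show ?thesis unfolding zeta_def by simp
qed

lemma zeta_anti: "j \<le> j' \<Longrightarrow> zeta n lam j' \<le> zeta n lam j"
  unfolding zeta_def by (rule card_mono) auto

lemma zeta_pos:
  assumes "is_partition n lam" "1 \<le> n" "j \<le> lam 1"
  shows "1 \<le> zeta n lam j"
  using zeta_iff[OF assms(1), of 1 j] assms by simp

lemma in_shape_iff:
  assumes "is_partition n lam"
  shows "in_shape n lam j i \<longleftrightarrow> 1 \<le> j \<and> 1 \<le> i \<and> i \<le> n \<and> j \<le> lam i"
proof
  assume a: "in_shape n lam j i"
  then have "i \<le> n" using zeta_le[of n lam j] by (auto simp: in_shape_def)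
  then show "1 \<le> j \<and> 1 \<le> i \<and> i \<le> n \<and> j \<le> lam i"
    using a zeta_iff[OF assms] by (auto simp: in_shape_def)
next
  assume a: "1 \<le> j \<and> 1 \<le> i \<and> i \<le> n \<and> j \<le> lam i"
  then have "lam i \<le> lam 1" using part_mono[OF assms, of 1 i] by simp
  then show "in_shape n lam j i" using a zeta_iff[OF assms] by (auto simp: in_shape_def)
qed

lemma R_iff:
  assumes "is_partition n lam" "1 \<le> i" "i < n"
  shows "i \<in> R_of n lam \<longleftrightarrow> lam (i+1) < lam i"
proof
  assume "i \<in> R_of n lam"
  then obtain j where j: "i = zeta n lam j" "j \<in> {1..lam 1}" "zeta n lam j < n"
    by (auto simp: R_of_def)
  have "j \<le> lam i" using zeta_iff[OF assms(1), of i j] j assms by simp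
  moreover have "\<not> j \<le> lam (i+1)" using zeta_iff[OF assms(1), of "i+1" j] j assms by simp
  ultimately show "lam (i+1) < lam i" by simp
next
  assume lt: "lam (i+1) < lam i"
  have "lam i \<le> lam 1" using part_mono[OF assms(1), of 1 i] assms by simp
  have z: "zeta n lam (lam i) = i"
  proof (rule antisym)
    show "i \<le> zeta n lam (lam i)" using zeta_iff[OF assms(1), of i "lam i"] assms by simp
    show "zeta n lam (lam i) \<le> i"
    proof (rule ccontr)
      assume "\<not> zeta n lam (lam i) \<le> i"
      then have "i+1 \<le> zeta n lam (lam i)" by simp
      then have "lam i \<le> lam (i+1)" using zeta_iff[OF assms(1), of "i+1" "lam i"] assms
          zeta_le[of n lam "lam i"] by simp
      then show False using lt by simp
    qed
  qed
  have "1 \<le> lam i" using lt by simp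
  then show "i \<in> R_of n lam" unfolding R_of_def using z assms \<open>lam i \<le> lam 1\<close>
    by (intro CollectI exI[of _ "lam i"]) auto
qed

lemma R_sub:
  assumes "is_partition n lam" "1 \<le> n"
  shows "R_of n lam \<subseteq> {1..<n}"
  using zeta_pos[OF assms] by (auto simp: R_of_def)

lemma R_fin: "finite (R_of n lam)"
proof -
  have "R_of n lam \<subseteq> {..n}" using zeta_le by (auto simp: R_of_def)
  then show ?thesis using finite_subset by blast
qed



lemma qq_props:
  fixes R :: "nat set"
  assumes fin: "finite R" and sub: "R \<subseteq> {1..<n}" and h: "1 \<le> h" "h \<le> card R"
  shows "qq n R h \<in> R" "qq n R h < qq n R (h+1)" "qq n R (h+1) \<le> n"
    "qq n R (h+1) = n \<or> qq n R (h+1) \<in> R"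
    "\<And>x. x \<in> R \<Longrightarrow> qq n R h < x \<Longrightarrow> x < qq n R (h+1) \<Longrightarrow> False"
proof -
  let ?L = "sorted_list_of_set R"
  have len: "length ?L = card R" by simp
  have st: "sorted_wrt (<) ?L" by simp
  have setL: "set ?L = R" using fin by simp
  have q1: "qq n R h = ?L ! (h-1)" using h by (simp add: qq_def)
  show m1: "qq n R h \<in> R" using q1 h len setL by (metis diff_less le_less_trans less_one nth_mem not_le)
  have lt: "\<And>a b. a < b \<Longrightarrow> b < card R \<Longrightarrow> ?L ! a < ?L ! b"
    using st len by (metis sorted_wrt_nth_less)
  have le: "\<And>a b. a \<le> b \<Longrightarrow> b < card R \<Longrightarrow> ?L ! a \<le> ?L ! b"
    using lt by (metis le_less)
  show "qq n R h < qq n R (h+1)"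
  proof (cases "h+1 \<le> card R")
    case True
    then have "qq n R (h+1) = ?L ! h" by (simp add: qq_def)
    then show ?thesis using q1 lt[of "h-1" h] True h by simp
  next
    case False
    then have "qq n R (h+1) = n" by (simp add: qq_def)
    then show ?thesis using m1 sub by auto
  qed
  show "qq n R (h+1) \<le> n"
  proof (cases "h+1 \<le> card R")
    case True
    then have "qq n R (h+1) = ?L ! h" by (simp add: qq_def)
    moreover have "?L ! h \<in> R" using True len setL by (metis Suc_eq_plus1 Suc_le_lessD nth_mem)
    ultimately show ?thesis using sub by auto
  next
    case False
    then show ?thesis by (simp add: qq_def)
  qed
  show "qq n R (h+1) = n \<or> qq n R (h+1) \<in> R"
  proof (cases "h+1 \<le> card R")
    case True
    then have "qq n R (h+1) = ?L ! h" by (simp add: qq_def)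
    moreover have "?L ! h \<in> R" using True len setL by (metis Suc_eq_plus1 Suc_le_lessD nth_mem)
    ultimately show ?thesis by simp
  next
    case False
    then show ?thesis by (simp add: qq_def)
  qed
  fix x assume x: "x \<in> R" "qq n R h < x" "x < qq n R (h+1)"
  obtain m where m: "m < card R" "x = ?L ! m" using x(1) setL len by (metis in_set_conv_nth)
  show False
  proof (cases "m \<le> h - 1")
    case True
    have "h - 1 < card R" using h by simp
    then show False using le[of m "h-1"] m x(2) q1 True by simp
  next
    case False
    then have "h \<le> m" by simp
    then have hc: "h+1 \<le> card R" using m by simp
    then have "qq n R (h+1) = ?L ! h" by (simp add: qq_def)
    then show False using le[of h m] m x(3) \<open>h \<le> m\<close> by simp
  qed
qed

lemma qq_surj:
  fixes R :: "nat set"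
  assumes fin: "finite R" and a: "a \<in> R"
  shows "\<exists>h \<in> {1..card R}. qq n R h = a"
proof -
  let ?L = "sorted_list_of_set R"
  have len: "length ?L = card R" by simp
  have setL: "set ?L = R" using fin by simp
  obtain m where m: "m < card R" "a = ?L ! m" using a setL len by (metis in_set_conv_nth)
  have "qq n R (m+1) = a" using m by (simp add: qq_def)
  then show ?thesis using m by (intro bexI[of _ "m+1"]) auto
qed



definition fm :: "(nat \<Rightarrow> nat) \<Rightarrow> nat \<Rightarrow> nat \<Rightarrow> nat" where
  "fm g m i = Min ((\<lambda>k. g k - k) ` {i..m})"

definition cm :: "(nat \<Rightarrow> nat) \<Rightarrow> nat \<Rightarrow> nat \<Rightarrow> nat" where
  "cm g m i = i + fm g m i"

lemma fm_le: "i \<le> k \<Longrightarrow> k \<le> m \<Longrightarrow> fm g m i \<le> g k - k"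
  unfolding fm_def by (rule Min_le) auto

lemma fm_in: "i \<le> m \<Longrightarrow> \<exists>k\<in>{i..m}. fm g m i = g k - k"
proof -
  assume "i \<le> m"
  then have "fm g m i \<in> (\<lambda>k. g k - k) ` {i..m}" unfolding fm_def by (intro Min_in) auto
  then show ?thesis by auto
qed

lemma fm_ge: "i \<le> m \<Longrightarrow> (\<And>k. i \<le> k \<Longrightarrow> k \<le> m \<Longrightarrow> c \<le> g k - k) \<Longrightarrow> c \<le> fm g m i"
proof -
  assume a: "i \<le> m" and h: "\<And>k. i \<le> k \<Longrightarrow> k \<le> m \<Longrightarrow> c \<le> g k - k"
  obtain k where "k \<in> {i..m}" "fm g m i = g k - k" using fm_in[OF a] by blast
  then show ?thesis using h by simp
qed

lemma fm_mono: "i \<le> i' \<Longrightarrow> i' \<le> m \<Longrightarrow> fm g m i \<le> fm g m i'"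
  by (rule fm_ge) (simp, rule fm_le, simp_all)

lemma fm_mono2: "i \<le> m \<Longrightarrow> m \<le> m' \<Longrightarrow> fm g m' i \<le> fm g m i"
  by (rule fm_ge) (simp, rule fm_le, simp_all)

lemma fm_split: "i \<le> a \<Longrightarrow> a < b \<Longrightarrow> fm g b i = min (fm g a i) (fm g b (a+1))"
proof -
  assume a: "i \<le> a" "a < b"
  have "{i..b} = {i..a} \<union> {a+1..b}" using a by auto
  then have "(\<lambda>k. g k - k) ` {i..b} = (\<lambda>k. g k - k) ` {i..a} \<union> (\<lambda>k. g k - k) ` {a+1..b}" by auto
  then show ?thesis unfolding fm_def using a by (simp add: Min_Un)
qed

lemma cm_self: "i \<le> g i \<Longrightarrow> cm g i i = g i"
  unfolding cm_def fm_def by simp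

lemma cm_ge: "i \<le> cm g m i" unfolding cm_def by simp

lemma cm_step: "i \<le> i' \<Longrightarrow> i' \<le> m \<Longrightarrow> cm g m i + (i' - i) \<le> cm g m i'"
  unfolding cm_def using fm_mono[of i i' m g] by simp

lemma incr:
  fixes g :: "nat \<Rightarrow> nat" and a b i k :: nat
  assumes inc: "\<And>k. a < k \<Longrightarrow> k < b \<Longrightarrow> g k < g (k+1)"
  shows "a < i \<Longrightarrow> i \<le> k \<Longrightarrow> k \<le> b \<Longrightarrow> g i + (k - i) \<le> g k"
proof (induction k rule: nat_induct)
  case 0 then show ?case by simp
next
  case (Suc k)
  show ?case
  proof (cases "i = Suc k")
    case True then show ?thesis by simp
  next
    case False
    then have "i \<le> k" using Suc by simp
    then have "g i + (k - i) \<le> g k" using Suc by simp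
    moreover have "g k < g (k+1)" using inc[of k] Suc \<open>i \<le> k\<close> by simp
    ultimately show ?thesis using \<open>i \<le> k\<close> by simp
  qed
qed

lemma column_lemma:
  fixes g :: "nat \<Rightarrow> nat" and a b :: nat
  assumes a1: "1 \<le> a" and ab: "a < b"
    and up: "\<And>k. 1 \<le> k \<Longrightarrow> k \<le> b \<Longrightarrow> k \<le> g k"
    and inc: "\<And>k. a < k \<Longrightarrow> k < b \<Longrightarrow> g k < g (k+1)"
    and gap: "g (a+1) \<le> g a \<Longrightarrow> g a - g (a+1) + 1 \<le> b - a \<and>
                (\<forall>t \<in> {1..g a - g (a+1) + 1}. g (a+t) = g a - (g a - g (a+1) + 1) + t)"
  shows "cm g a a = g a"
    "cm g a ` {1..a} \<subseteq> cm g b ` {1..b}"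
    "{x \<in> cm g b ` {1..b} - cm g a ` {1..a}. x < g a} \<subseteq> {1..g a} - cm g a ` {1..a}"
    "\<forall>x \<in> {x \<in> cm g b ` {1..b} - cm g a ` {1..a}. x < g a}.
       \<forall>y \<in> ({1..g a} - cm g a ` {1..a}) - {x \<in> cm g b ` {1..b} - cm g a ` {1..a}. x < g a}. y < x"
proof -
  have upa: "a \<le> g a" using up a1 ab by simp
  show cmaa: "cm g a a = g a" using cm_self upa .
  define phi where "phi = g (a+1) - (a+1)"
  have up1: "a+1 \<le> g (a+1)" using up[of "a+1"] ab by simp
  have g1: "g (a+1) = a + 1 + phi" using up1 phi_def by simp
  have cmb_hi: "\<And>i. a < i \<Longrightarrow> i \<le> b \<Longrightarrow> cm g b i = g i"
  proof -
    fix i assume i: "a < i" "i \<le> b"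
    have "fm g b i = g i - i"
    proof (rule antisym)
      show "fm g b i \<le> g i - i" using fm_le[of i i b g] i by simp
      show "g i - i \<le> fm g b i"
      proof (rule fm_ge)
        show "i \<le> b" using i by simp
        fix k assume k: "i \<le> k" "k \<le> b"
        have "g i + (k - i) \<le> g k" using incr[where a=a and b=b and g=g, OF inc] i k by blast
        then show "g i - i \<le> g k - k" using k by simp
      qed
    qed
    then show "cm g b i = g i" unfolding cm_def using up[of i] i a1 by simp
  qed
  have fmb1: "fm g b (a+1) = phi"
    using cmb_hi[of "a+1"] ab g1 unfolding cm_def by simp
  have cmb_lo: "\<And>i. i \<le> a \<Longrightarrow> cm g b i = min (cm g a i) (i + phi)"
    using fm_split[OF _ ab, of _ g] fmb1 unfolding cm_def by simp
  have cma_le: "\<And>i. i \<le> a \<Longrightarrow> cm g a i \<le> g a"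
    using cm_step[of _ a a g] cmaa by fastforce
  show "cm g a ` {1..a} \<subseteq> cm g b ` {1..b}"
  proof (cases "g a < g (a+1)")
    case True
    have "\<And>i. i \<le> a \<Longrightarrow> cm g b i = cm g a i"
    proof -
      fix i assume i: "i \<le> a"
      have "cm g a i + (a - i) \<le> g a" using cm_step[of i a a g] i cmaa by simp
      then have "cm g a i \<le> i + phi" using True g1 i by simp
      then show "cm g b i = cm g a i" using cmb_lo[OF i] by simp
    qed
    then show ?thesis using ab by force
  next
    case False
    then have ge: "g (a+1) \<le> g a" by simp
    define s where "s = g a - g (a+1) + 1"
    have s1: "s \<le> b - a" and st: "\<And>t. 1 \<le> t \<Longrightarrow> t \<le> s \<Longrightarrow> g (a+t) = a + t + phi"
      using gap[OF ge] g1 ge unfolding s_def by auto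
    have gas: "g a = a + s + phi" using s_def ge g1 by simp
    show ?thesis
    proof
      fix x assume "x \<in> cm g a ` {1..a}"
      then obtain i where i: "1 \<le> i" "i \<le> a" "x = cm g a i" by auto
      show "x \<in> cm g b ` {1..b}"
      proof (cases "cm g a i \<le> i + phi")
        case True
        then show ?thesis using cmb_lo[OF i(2)] i ab by (intro image_eqI[where x=i]) auto
      next
        case F: False
        define i' where "i' = x - phi"
        have xle: "x \<le> g a" using cma_le i by simp
        have ii: "i < i'" "i' \<le> a + s" "x = i' + phi" using F i xle gas unfolding i'_def by auto
        show ?thesis
        proof (cases "i' \<le> a")
          case True
          have "cm g a i + (i' - i) \<le> cm g a i'" using cm_step[of i i' a g] ii True by simp
          then have "cm g b i' = x" using cmb_lo[OF True] F ii by simp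
          then show ?thesis using True ii i ab by (intro image_eqI[where x=i']) auto
        next
          case False
          have "cm g b i' = g i'" using cmb_hi[of i'] False ii s1 by simp
          also have "\<dots> = x" using st[of "i' - a"] False ii by simp
          finally show ?thesis using False ii s1 by (intro image_eqI[where x=i']) auto
        qed
      qed
    qed
  qed
  let ?X = "{x \<in> cm g b ` {1..b} - cm g a ` {1..a}. x < g a}"
  let ?A = "{1..g a} - cm g a ` {1..a}"
  show "?X \<subseteq> ?A"
  proof
    fix x assume x: "x \<in> ?X"
    then obtain i where "1 \<le> i" "x = cm g b i" by auto
    then have "1 \<le> x" using cm_ge[of i g b] by simp
    then show "x \<in> ?A" using x by auto
  qed
  show "\<forall>x \<in> ?X. \<forall>y \<in> ?A - ?X. y < x"
  proof (cases "g a < g (a+1)")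
    case True
    have "?X = {}"
    proof (rule ccontr)
      assume "?X \<noteq> {}"
      then obtain x where x: "x \<in> ?X" by blast
      then obtain i where i: "1 \<le> i" "i \<le> b" "x = cm g b i" by auto
      show False
      proof (cases "i \<le> a")
        case True
        have "cm g a i + (a - i) \<le> g a" using cm_step[of i a a g] True cmaa by simp
        then have "cm g a i \<le> i + phi" using \<open>g a < g (a+1)\<close> g1 True by simp
        then have "x = cm g a i" using cmb_lo[OF True] i by simp
        then show False using x i True by auto
      next
        case False
        then have "x = g i" using cmb_hi i by simp
        moreover have "g (a+1) + (i - (a+1)) \<le> g i" using incr[where a=a and b=b and g=g, OF inc, of "a+1" i] False i by simp
        ultimately show False using x \<open>g a < g (a+1)\<close> by simp
      qed
    qed
    then show ?thesis by (metis empty_iff)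
  next
    case False
    then have ge: "g (a+1) \<le> g a" by simp
    define s where "s = g a - g (a+1) + 1"
    have s1: "s \<le> b - a" and st: "\<And>t. 1 \<le> t \<Longrightarrow> t \<le> s \<Longrightarrow> g (a+t) = a + t + phi"
      using gap[OF ge] g1 ge unfolding s_def by auto
    have gas: "g a = a + s + phi" using s_def ge g1 by simp
    show ?thesis
    proof (intro ballI)
      fix x y assume x: "x \<in> ?X" and y: "y \<in> ?A - ?X"
      have xb: "x \<in> cm g b ` {1..b}" and xna: "x \<notin> cm g a ` {1..a}" and xlt: "x < g a"
        using x by simp_all
      obtain i where i: "1 \<le> i" "i \<le> b" "x = cm g b i" using xb by auto
      have xprop: "x = i + phi \<and> i < a + s \<and> (i \<le> a \<longrightarrow> i + phi < cm g a i)"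
      proof (cases "i \<le> a")
        case True
        have "cm g a i \<in> cm g a ` {1..a}" using i True by simp
        then have "x \<noteq> cm g a i" using xna by blast
        moreover have "1 \<le> s" using s_def by simp
        moreover have "x = min (cm g a i) (i + phi)" using cmb_lo[OF True] i by simp
        ultimately show ?thesis using True by (simp add: min_def split: if_splits)
      next
        case False
        then have xg: "x = g i" using cmb_hi i by simp
        have "i < a + s"
        proof (rule ccontr)
          assume "\<not> i < a + s"
          moreover have "1 \<le> s" using s_def by simp
          ultimately have "g (a+s) + (i - (a+s)) \<le> g i" using incr[where a=a and b=b and g=g, OF inc, of "a+s" i] i
            by simp
          moreover have "g (a+s) = a + s + phi" using st[of s] \<open>1 \<le> s\<close> by simp
          ultimately show False using gas xg xlt by simp
        qed
        then show ?thesis using st[of "i - a"] False xg by simp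
      qed
      have yA: "y \<in> ?A" using y by (rule DiffD1)
      have ynX: "y \<notin> ?X" using y by blast
      have yle: "y \<le> g a" using yA by simp
      have yna: "y \<notin> cm g a ` {1..a}" using yA by simp
      have "g a \<in> cm g a ` {1..a}" using cmaa a1 by (intro image_eqI[where x=a]) auto
      then have "y \<noteq> g a" using yna by blast
      then have ylt: "y < g a" using yle by simp
      have ynb: "y \<notin> cm g b ` {1..b}"
      proof
        assume "y \<in> cm g b ` {1..b}"
        then have "y \<in> ?X" using yna ylt by simp
        then show False using ynX by blast
      qed
      show "y < x"
      proof (rule ccontr)
        assume "\<not> y < x"
        then have yx: "x \<le> y" by simp
        define i' where "i' = y - phi"
        have ii: "i \<le> i'" "i' < a + s" "y = i' + phi" using yx ylt gas xprop unfolding i'_def by auto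
        show False
        proof (cases "i' \<le> a")
          case True
          then have "i \<le> a" using ii by simp
          then have "i + phi < cm g a i" using xprop by simp
          moreover have "cm g a i + (i' - i) \<le> cm g a i'" using cm_step[of i i' a g] ii True by simp
          ultimately have "cm g b i' = y" using cmb_lo[OF True] ii by simp
          moreover have "i' \<in> {1..b}" using True ii i ab by simp
          ultimately show False using ynb by blast
        next
          case False
          have "cm g b i' = g i'" using cmb_hi[of i'] False ii s1 by simp
          also have "\<dots> = y" using st[of "i' - a"] False ii by simp
          finally have "cm g b i' = y" .
          moreover have "i' \<in> {1..b}" using False ii s1 by simp
          ultimately show False using ynb by blast
        qed
      qed
    qed
  qed
qed



definition Mt :: "nat \<Rightarrow> (nat \<Rightarrow> nat) \<Rightarrow> (nat \<Rightarrow> nat) \<Rightarrow> nat \<Rightarrow> nat \<Rightarrow> nat" where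
  "Mt n lam g j i = (if in_shape n lam j i then cm g (zeta n lam j) i
     else if j = 0 \<and> 1 \<le> i \<and> i \<le> n then i else 0)"

lemma descent:
  assumes "is_partition n lam" "x \<le> y" "lam y < lam x"
  shows "\<exists>k. x \<le> k \<and> k < y \<and> lam (k+1) < lam k"
  using assms(2,3)
proof (induction y rule: dec_induct)
  case base then show ?case by simp
next
  case (step y)
  show ?case
  proof (cases "lam (y+1) < lam y")
    case True then show ?thesis using step by (intro exI[of _ y]) simp
  next
    case False
    then have "lam y < lam x" using step by simp
    then obtain k where "x \<le> k \<and> k < y \<and> lam (k+1) < lam k" using step by blast
    then show ?thesis by (intro exI[of _ k]) simp
  qed
qed

lemma carrel_incr:
  assumes P: "is_partition n lam" and Ri: "R_increasing n (R_of n lam) g"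
    and i: "1 \<le> i" "i \<le> k" "k \<le> n" "lam k = lam i"
  shows "g i + (k - i) \<le> g k"
proof -
  have inc: "\<And>m. i - 1 < m \<Longrightarrow> m < k \<Longrightarrow> g m < g (m+1)"
  proof -
    fix m assume m: "i - 1 < m" "m < k"
    have "lam (m+1) \<le> lam m" using part_mono[OF P, of m "m+1"] m i by simp
    moreover have "lam m \<le> lam i" using part_mono[OF P, of i m] m i by simp
    moreover have "lam k \<le> lam (m+1)" using part_mono[OF P, of "m+1" k] m i by simp
    ultimately have "lam (m+1) = lam m" using i by simp
    then have "m \<notin> R_of n lam" using R_iff[OF P, of m] m i by simp
    then show "g m < g (m+1)" using Ri m i unfolding R_increasing_def by simp
  qed
  show ?thesis using incr[where a="i-1" and b=k and g=g, OF inc, of i k] i by simp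
qed

lemma upper_ge: "upper_tuple n g \<Longrightarrow> 1 \<le> i \<Longrightarrow> i \<le> n \<Longrightarrow> i \<le> g i \<and> g i \<le> n"
  unfolding upper_tuple_def by auto

lemma M_tab:
  assumes P: "is_partition n lam" and U: "upper_tuple n g"
  shows "tableau n lam (Mt n lam g)"
  unfolding tableau_def
proof (intro conjI allI impI)
  fix j i assume "\<not> in_shape n lam j i"
  then show "Mt n lam g j i = (if j = 0 \<and> 1 \<le> i \<and> i \<le> n then i else 0)" by (simp add: Mt_def)
next
  fix j i assume s: "in_shape n lam j i"
  then have si: "1 \<le> j" "1 \<le> i" "i \<le> n" "j \<le> lam i" using in_shape_iff[OF P] by auto
  have iz: "i \<le> zeta n lam j" using s by (simp add: in_shape_def)
  have "cm g (zeta n lam j) i \<le> g i" using fm_le[of i i "zeta n lam j" g] iz upper_ge[OF U si(2,3)]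
    unfolding cm_def by arith
  then show "Mt n lam g j i \<in> {1..n}" using s si upper_ge[OF U si(2,3)] cm_ge[of i g]
    by (simp add: Mt_def) (meson le_trans)
next
  fix j i assume s: "in_shape n lam j i \<and> in_shape n lam j (i+1)"
  then have "i + 1 \<le> zeta n lam j" by (simp add: in_shape_def)
  then have "cm g (zeta n lam j) i + 1 \<le> cm g (zeta n lam j) (i+1)" using cm_step[of i "i+1"] by simp
  then show "Mt n lam g j i < Mt n lam g j (i+1)" using s by (simp add: Mt_def)
next
  fix j i assume s: "in_shape n lam j i \<and> in_shape n lam (j+1) i"
  then have "i \<le> zeta n lam (j+1)" by (simp add: in_shape_def)
  moreover have "zeta n lam (j+1) \<le> zeta n lam j" by (rule zeta_anti) simp
  ultimately have "fm g (zeta n lam j) i \<le> fm g (zeta n lam (j+1)) i" by (rule fm_mono2)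
  then show "Mt n lam g j i \<le> Mt n lam g (j+1) i" using s by (simp add: Mt_def cm_def)
qed

lemma M_rowend:
  assumes P: "is_partition n lam" and U: "upper_tuple n g" and Ri: "R_increasing n (R_of n lam) g"
  shows "row_end_is n lam (Mt n lam g) g"
  unfolding row_end_is_def
proof
  fix i assume i: "i \<in> {1..n}"
  show "Mt n lam g (lam i) i = g i"
  proof (cases "lam i = 0")
    case True
    have "lam n \<le> lam i" using part_mono[OF P, of i n] i by simp
    then have "g i + (n - i) \<le> g n" using carrel_incr[OF P Ri, of i n] i True by simp
    moreover have "g n \<le> n" "i \<le> g i" using upper_ge[OF U, of n] upper_ge[OF U, of i] i by auto
    ultimately have "g i = i" using i by simp
    moreover have "\<not> in_shape n lam 0 i" by (simp add: in_shape_def)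
    ultimately show ?thesis using True i by (simp add: Mt_def)
  next
    case False
    then have s: "in_shape n lam (lam i) i" using in_shape_iff[OF P] i by simp
    let ?m = "zeta n lam (lam i)"
    have im: "i \<le> ?m" using s by (simp add: in_shape_def)
    have "fm g ?m i = g i - i"
    proof (rule antisym)
      show "fm g ?m i \<le> g i - i" using fm_le[of i i ?m g] im by simp
      show "g i - i \<le> fm g ?m i"
      proof (rule fm_ge[OF im])
        fix k assume k: "i \<le> k" "k \<le> ?m"
        have kn: "k \<le> n" using k zeta_le[of n lam "lam i"] by simp
        have "lam i \<le> lam k" using zeta_iff[OF P, of k "lam i"] k kn i by simp
        moreover have "lam k \<le> lam i" using part_mono[OF P, of i k] k kn i by simp
        ultimately have "g i + (k - i) \<le> g k" using carrel_incr[OF P Ri, of i k] i k kn by simp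
        then show "g i - i \<le> g k - k" using k by simp
      qed
    qed
    then show ?thesis using s upper_ge[OF U, of i] i by (simp add: Mt_def cm_def)
  qed
qed

lemma tab_col:
  assumes P: "is_partition n lam" and T: "tableau n lam T"
    and s: "in_shape n lam j i" "in_shape n lam j k" "i \<le> k"
  shows "T j i + (k - i) \<le> T j k"
  using s(3,2)
proof (induction k rule: dec_induct)
  case base then show ?case by simp
next
  case (step k)
  have "in_shape n lam j k" using step in_shape_iff[OF P, of j k] in_shape_iff[OF P, of j "k+1"]
      part_mono[OF P, of k "k+1"] s(1) in_shape_iff[OF P, of j i] by auto
  then have "T j i + (k - i) \<le> T j k" "T j k < T j (k+1)" using step T
    unfolding tableau_def by auto
  then show ?case using step by simp
qed

lemma tab_row:
  assumes P: "is_partition n lam" and T: "tableau n lam T"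
    and s: "in_shape n lam j i" "j \<le> j'" "j' \<le> lam i"
  shows "T j i \<le> T j' i"
  using s(2,3)
proof (induction j' rule: dec_induct)
  case base then show ?case by simp
next
  case (step j')
  have "in_shape n lam j' i" "in_shape n lam (j'+1) i"
    using step s(1) in_shape_iff[OF P, of j i] in_shape_iff[OF P, of j' i] in_shape_iff[OF P, of "j'+1" i]
    by auto
  then have "T j' i \<le> T (j'+1) i" using T unfolding tableau_def by auto
  then show ?case using step by simp
qed

lemma M_max:
  assumes P: "is_partition n lam" and T: "tableau n lam T" and re: "row_end_is n lam T g"
  shows "tab_le T (Mt n lam g)"
  unfolding tab_le_def
proof (intro allI)
  fix j i
  show "T j i \<le> Mt n lam g j i"
  proof (cases "in_shape n lam j i")
    case False
    then show ?thesis using T by (simp add: tableau_def Mt_def)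
  next
    case True
    have si: "1 \<le> j" "1 \<le> i" "i \<le> n" "j \<le> lam i" using in_shape_iff[OF P] True by auto
    let ?m = "zeta n lam j"
    have im: "i \<le> ?m" using True by (simp add: in_shape_def)
    have "T j i - i \<le> fm g ?m i"
    proof (rule fm_ge[OF im])
      fix k assume k: "i \<le> k" "k \<le> ?m"
      have kn: "k \<le> n" using k zeta_le[of n lam j] by simp
      have sk: "in_shape n lam j k" using True k unfolding in_shape_def by simp
      have jk: "j \<le> lam k" using in_shape_iff[OF P] sk by simp
      have "T j i + (k - i) \<le> T j k" using tab_col[OF P T True sk k(1)] .
      moreover have "T j k \<le> T (lam k) k" using tab_row[OF P T sk _ ] jk by simp
      moreover have "T (lam k) k = g k" using re k kn si unfolding row_end_is_def by simp
      ultimately show "T j i - i \<le> g k - k" using k by simp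
    qed
    then show ?thesis using True by (simp add: Mt_def cm_def)
  qed
qed

lemma rem_eq:
  assumes P: "is_partition n lam" and U: "upper_tuple n g" and Ri: "R_increasing n (R_of n lam) g"
  shows "row_end_max n lam g = Mt n lam g"
  unfolding row_end_max_def
proof (rule the_equality)
  show "tableau n lam (Mt n lam g) \<and> row_end_is n lam (Mt n lam g) g \<and>
    (\<forall>T. tableau n lam T \<and> row_end_is n lam T g \<longrightarrow> tab_le T (Mt n lam g))"
    using M_tab[OF P U] M_rowend[OF P U Ri] M_max[OF P] by blast
next
  fix M assume M: "tableau n lam M \<and> row_end_is n lam M g \<and>
    (\<forall>T. tableau n lam T \<and> row_end_is n lam T g \<longrightarrow> tab_le T M)"
  have "tab_le (Mt n lam g) M" using M M_tab[OF P U] M_rowend[OF P U Ri] by blast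
  moreover have "tab_le M (Mt n lam g)" using M_max[OF P] M by blast
  ultimately show "M = Mt n lam g" unfolding tab_le_def by (intro ext) (meson antisym)
qed

lemma col_M:
  assumes P: "is_partition n lam" and U: "upper_tuple n g" and n1: "1 \<le> n" and j: "j \<le> lam 1"
  shows "col_set n lam (Mt n lam g) j = cm g (zeta n lam j) ` {1..zeta n lam j}"
proof (cases "j = 0")
  case True
  have "\<And>i. i \<in> {1..n} \<Longrightarrow> Mt n lam g 0 i = cm g n i"
  proof -
    fix i assume i: "i \<in> {1..n}"
    have "fm g n i \<le> g n - n" using fm_le[of i n n g] i by simp
    moreover have "g n \<le> n" using upper_ge[OF U, of n] n1 by simp
    ultimately have "fm g n i = 0" by simp
    then show "Mt n lam g 0 i = cm g n i" using i by (simp add: Mt_def cm_def in_shape_def)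
  qed
  then show ?thesis unfolding col_set_def True zeta0 by (intro image_cong) auto
next
  case False
  have "\<And>i. i \<in> {1..zeta n lam j} \<Longrightarrow> Mt n lam g j i = cm g (zeta n lam j) i"
    using False j by (simp add: Mt_def in_shape_def)
  then show ?thesis unfolding col_set_def by (intro image_cong) auto
qed



lemma column_ok:
  assumes P: "is_partition n lam" and n1: "1 \<le> n" and G: "gapless n (R_of n lam) g"
    and h: "h \<in> {1..card (R_of n lam)}"
    and a_def: "a = qq n (R_of n lam) h" and b_def: "b = qq n (R_of n lam) (h+1)"
  shows "zeta n lam (lam b) = b" "zeta n lam (lam b + 1) = a" "lam b + 1 \<le> lam 1"
    "cm g a a = g a"
    "cm g a ` {1..a} \<subseteq> cm g b ` {1..b}"
    "{x \<in> cm g b ` {1..b} - cm g a ` {1..a}. x < g a} \<subseteq> {1..g a} - cm g a ` {1..a}"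
    "\<forall>x \<in> {x \<in> cm g b ` {1..b} - cm g a ` {1..a}. x < g a}.
       \<forall>y \<in> ({1..g a} - cm g a ` {1..a}) - {x \<in> cm g b ` {1..b} - cm g a ` {1..a}. x < g a}. y < x"
proof -
  let ?R = "R_of n lam"
  have fin: "finite ?R" by (rule R_fin)
  have sub: "?R \<subseteq> {1..<n}" by (rule R_sub[OF P n1])
  have h1: "1 \<le> h" "h \<le> card ?R" using h by auto
  note qp = qq_props[OF fin sub h1]
  have aR: "a \<in> ?R" using qp(1) a_def by simp
  have ab: "a < b" using qp(2) a_def b_def by simp
  have bn: "b \<le> n" using qp(3) b_def by simp
  have bR: "b = n \<or> b \<in> ?R" using qp(4) b_def by simp
  have noR: "\<And>x. x \<in> ?R \<Longrightarrow> a < x \<Longrightarrow> x < b \<Longrightarrow> False" using qp(5) a_def b_def by blast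
  have a1: "1 \<le> a" "a < n" using aR sub by auto
  have U: "upper_tuple n g" and Ri: "R_increasing n ?R g" using G by (auto simp: gapless_def)
  have lama: "lam (a+1) < lam a" using R_iff[OF P a1] aR by simp
  have lamab: "lam (a+1) = lam b"
  proof (rule ccontr)
    assume "lam (a+1) \<noteq> lam b"
    moreover have "lam b \<le> lam (a+1)" using part_mono[OF P, of "a+1" b] ab bn by simp
    ultimately have "lam b < lam (a+1)" by simp
    then obtain k where k: "a+1 \<le> k" "k < b" "lam (k+1) < lam k" using descent[OF P, of "a+1" b] ab by auto
    then have "k \<in> ?R" using R_iff[OF P, of k] bn by simp
    then show False using noR[of k] k by simp
  qed
  show zb: "zeta n lam (lam b) = b"
  proof (rule antisym)
    show "b \<le> zeta n lam (lam b)" using zeta_iff[OF P, of b "lam b"] ab bn by simp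
    show "zeta n lam (lam b) \<le> b"
    proof (rule ccontr)
      assume "\<not> zeta n lam (lam b) \<le> b"
      then have b1: "b + 1 \<le> zeta n lam (lam b)" by simp
      then have bn': "b < n" using zeta_le[of n lam "lam b"] by simp
      then have "lam b \<le> lam (b+1)" using zeta_iff[OF P, of "b+1" "lam b"] b1 by simp
      moreover have "b \<in> ?R" using bR bn' by simp
      then have "lam (b+1) < lam b" using R_iff[OF P, of b] ab bn' by simp
      ultimately show False by simp
    qed
  qed
  show za: "zeta n lam (lam b + 1) = a"
  proof (rule antisym)
    show "a \<le> zeta n lam (lam b + 1)" using zeta_iff[OF P, of a "lam b + 1"] a1 lama lamab by simp
    show "zeta n lam (lam b + 1) \<le> a"
    proof (rule ccontr)
      assume "\<not> zeta n lam (lam b + 1) \<le> a"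
      then have "a + 1 \<le> zeta n lam (lam b + 1)" by simp
      then have "lam b + 1 \<le> lam (a+1)" using zeta_iff[OF P, of "a+1" "lam b + 1"] a1 by simp
      then show False using lamab by simp
    qed
  qed
  show "lam b + 1 \<le> lam 1" using part_mono[OF P, of 1 a] a1 lama lamab by simp
  have up: "\<And>k. 1 \<le> k \<Longrightarrow> k \<le> b \<Longrightarrow> k \<le> g k" using upper_ge[OF U] bn by force
  have inc: "\<And>k. a < k \<Longrightarrow> k < b \<Longrightarrow> g k < g (k+1)"
  proof -
    fix k assume k: "a < k" "k < b"
    then have "k \<notin> ?R" using noR by blast
    then show "g k < g (k+1)" using Ri k a1 bn unfolding R_increasing_def by simp
  qed
  have pp: "pp n ?R (h+1) = b - a" using a_def b_def by (simp add: pp_def)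
  have gap: "g (a+1) \<le> g a \<Longrightarrow> g a - g (a+1) + 1 \<le> b - a \<and>
                (\<forall>t \<in> {1..g a - g (a+1) + 1}. g (a+t) = g a - (g a - g (a+1) + 1) + t)"
  proof -
    assume ge: "g (a+1) \<le> g a"
    show ?thesis
    proof (cases "g (a+1) < g a")
      case True
      then have "let s = g a - g (a+1) + 1 in s \<le> pp n ?R (h+1) \<and>
          (\<forall>t \<in> {1..s}. g (a + t) = g a - s + t)"
        using G h a_def unfolding gapless_def by blast
      then show ?thesis using pp by (simp add: Let_def)
    next
      case False
      then have "g (a+1) = g a" using ge by simp
      moreover have "1 \<le> g a" using up[of a] a1 ab by simp
      ultimately show ?thesis using ab by simp
    qed
  qed
  note cl = column_lemma[OF a1(1) ab up inc gap]
  show "cm g a a = g a" by (rule cl(1))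
  show "cm g a ` {1..a} \<subseteq> cm g b ` {1..b}" by (rule cl(2))
  show "{x \<in> cm g b ` {1..b} - cm g a ` {1..a}. x < g a} \<subseteq> {1..g a} - cm g a ` {1..a}" by (rule cl(3))
  show "\<forall>x \<in> {x \<in> cm g b ` {1..b} - cm g a ` {1..a}. x < g a}.
       \<forall>y \<in> ({1..g a} - cm g a ` {1..a}) - {x \<in> cm g b ` {1..b} - cm g a ` {1..a}. x < g a}. y < x"
    by (rule cl(4))
qed



lemma consec:
  assumes P: "is_partition n lam" and n1: "1 \<le> n" and G: "gapless n (R_of n lam) g"
    and j: "1 \<le> j" "j + 1 \<le> lam 1"
  shows "col_set n lam (Mt n lam g) (j+1) \<subseteq> col_set n lam (Mt n lam g) j"
proof -
  let ?R = "R_of n lam"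
  have U: "upper_tuple n g" using G by (auto simp: gapless_def)
  define a where "a = zeta n lam (j+1)"
  define b where "b = zeta n lam j"
  have ca: "col_set n lam (Mt n lam g) (j+1) = cm g a ` {1..a}" using col_M[OF P U n1 j(2)] a_def by simp
  have cb: "col_set n lam (Mt n lam g) j = cm g b ` {1..b}" using col_M[OF P U n1, of j] j b_def by simp
  have ab: "a \<le> b" using zeta_anti[of j "j+1" n lam] a_def b_def by simp
  show ?thesis
  proof (cases "a = b")
    case True then show ?thesis using ca cb by simp
  next
    case False
    then have ab: "a < b" using ab by simp
    have bn: "b \<le> n" using zeta_le b_def by simp
    have a1: "1 \<le> a" using zeta_pos[OF P n1 j(2)] a_def by simp
    have aR: "a \<in> ?R" unfolding R_of_def using a_def j ab bn by auto
    have bR: "b = n \<or> b \<in> ?R"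
    proof (cases "b < n")
      case True
      then show ?thesis unfolding R_of_def using b_def j by auto
    qed (use bn in simp)
    have noR: "\<And>k. k \<in> ?R \<Longrightarrow> a < k \<Longrightarrow> k < b \<Longrightarrow> False"
    proof -
      fix k assume k: "k \<in> ?R" "a < k" "k < b"
      have "j \<le> lam (k+1)" using zeta_iff[OF P, of "k+1" j] k bn b_def by simp
      moreover have "\<not> j + 1 \<le> lam k" using zeta_iff[OF P, of k "j+1"] k bn a_def a1 by simp
      ultimately have "\<not> lam (k+1) < lam k" by simp
      then show False using R_iff[OF P, of k] k a1 bn by simp
    qed
    obtain h where h: "h \<in> {1..card ?R}" "qq n ?R h = a" using qq_surj[OF R_fin aR] by blast
    define b' where "b' = qq n ?R (h+1)"
    have h1: "1 \<le> h" "h \<le> card ?R" using h by auto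
    note qp = qq_props[OF R_fin R_sub[OF P n1] h1]
    have "b' = b"
    proof (rule ccontr)
      assume "b' \<noteq> b"
      then consider "b' < b" | "b < b'" by linarith
      then show False
      proof cases
        case 1
        then have "b' \<in> ?R" using qp(4) b'_def bn by auto
        then show False using noR[of b'] qp(2) h b'_def 1 by simp
      next
        case 2
        then have "b \<in> ?R" using bR qp(3) b'_def by auto
        then show False using qp(5)[of b] h b'_def 2 ab by simp
      qed
    qed
    then have "cm g a ` {1..a} \<subseteq> cm g b ` {1..b}"
      using column_ok(5)[OF P n1 G h(1) h(2)[symmetric] b'_def] by simp
    then show ?thesis using ca cb by simp
  qed
qed

lemma key_chain:
  assumes P: "is_partition n lam" and n1: "1 \<le> n" and G: "gapless n (R_of n lam) g"
    and l: "1 \<le> l" "l \<le> j" "j \<le> lam 1"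
  shows "col_set n lam (Mt n lam g) j \<subseteq> col_set n lam (Mt n lam g) l"
  using l(2,3)
proof (induction j rule: dec_induct)
  case base then show ?case by simp
next
  case (step j)
  have "col_set n lam (Mt n lam g) (j+1) \<subseteq> col_set n lam (Mt n lam g) j"
    using consec[OF P n1 G, of j] step l by simp
  then show ?case using step by simp
qed

theorem lemma5p1:
  fixes n :: nat and lam gam :: "nat \<Rightarrow> nat"
  assumes "1 \<le> n"
    and "is_partition n lam"
    and "gapless n (R_of n lam) gam"
  shows "is_key n lam (row_end_max n lam gam) \<and>
    (\<forall>h \<in> {1..card (R_of n lam)}.
       let R = R_of n lam; M = row_end_max n lam gam; qh = qq n R h;
           j = lam (qq n R (h+1));
           X = {x \<in> col_set n lam M j - col_set n lam M (j+1). x < gam qh};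
           A = {1..gam qh} - col_set n lam M (j+1)
       in M (j+1) qh = gam qh \<and> X \<subseteq> A \<and> (\<forall>x \<in> X. \<forall>y \<in> A - X. y < x))"
proof -
  note n1 = assms(1) and P = assms(2) and G = assms(3)
  have U: "upper_tuple n gam" and Ri: "R_increasing n (R_of n lam) gam" using G by (auto simp: gapless_def)
  have rm: "row_end_max n lam gam = Mt n lam gam" by (rule rem_eq[OF P U Ri])
  have key: "is_key n lam (Mt n lam gam)"
    unfolding is_key_def using M_tab[OF P U] key_chain[OF P n1 G] by blast
  have part2: "\<forall>h \<in> {1..card (R_of n lam)}.
       let R = R_of n lam; M = Mt n lam gam; qh = qq n R h;
           j = lam (qq n R (h+1));
           X = {x \<in> col_set n lam M j - col_set n lam M (j+1). x < gam qh};
           A = {1..gam qh} - col_set n lam M (j+1)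
       in M (j+1) qh = gam qh \<and> X \<subseteq> A \<and> (\<forall>x \<in> X. \<forall>y \<in> A - X. y < x)"
  proof
    fix h assume h: "h \<in> {1..card (R_of n lam)}"
    define a where "a = qq n (R_of n lam) h"
    define b where "b = qq n (R_of n lam) (h+1)"
    note co = column_ok[OF P n1 G h a_def b_def]
    have a1: "1 \<le> a" using qq_props(1)[OF R_fin R_sub[OF P n1], of h] h R_sub[OF P n1] a_def by auto
    have cj: "col_set n lam (Mt n lam gam) (lam b) = cm gam b ` {1..b}"
      using col_M[OF P U n1, of "lam b"] co(1,3) by simp
    have cj1: "col_set n lam (Mt n lam gam) (lam b + 1) = cm gam a ` {1..a}"
      using col_M[OF P U n1, of "lam b + 1"] co(2,3) by simp
    have sh: "in_shape n lam (lam b + 1) a" using co(2,3) a1 by (simp add: in_shape_def)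
    have me: "Mt n lam gam (lam b + 1) a = gam a" using sh co(2,4) by (simp add: Mt_def)
    show "let R = R_of n lam; M = Mt n lam gam; qh = qq n R h;
           j = lam (qq n R (h+1));
           X = {x \<in> col_set n lam M j - col_set n lam M (j+1). x < gam qh};
           A = {1..gam qh} - col_set n lam M (j+1)
       in M (j+1) qh = gam qh \<and> X \<subseteq> A \<and> (\<forall>x \<in> X. \<forall>y \<in> A - X. y < x)"
      unfolding Let_def a_def[symmetric] b_def[symmetric] cj cj1 me
      using co(6) co(7) by simp
  qed
  show ?thesis using key part2 rm by simp
qed

end
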